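(* Let $\ell\ge4$ be such that $T_\ell$ is long, let $t\in\mathring T_\ell$, and let $\tau\in\mathbb{C}$ with $|\tau-t|<1/\sqrt{B(t)}$. Then for every $s$ with $4<s<B^{1/6}(t)$, \[ \left|\sum_{k\ge0:\,|k-A(t)|>s\sqrt{B(t)}}a_k^2e^{k\tau}\right|\le2H(\mathrm{Re}\,\tau)\exp\left(-\tfrac18(s-4)^2\right). \]
   Context: Let $G(z)=\sum_{n\ge0}a_n^2z^n$ be an entire function with $a_n\ge0$, infinitely many non-zero. Put $H(t)=G(e^t)=\sum a_n^2e^{nt}$, $A(t)=H'(t)/H(t)$, $B(t)=A'(t)$, and assume $B$ is non-decreasing and unbounded on $\mathbb{R}$. Choose points $t_\ell\uparrow\infty$ with $B(t_\ell)=\ell^6$ (for all $\ell$ for which this is possible), and set $T_\ell=[t_\ell,t_{\ell+1}]$. $T_\ell$ is called long if $t_{\ell+1}-t_\ell\ge8/\ell^2$, and then its interior is $\mathring T_\ell=[t_\ell+2/\ell^2,\,t_{\ell+1}-2/\ell^2]$. *)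

theory Defs
  imports "HOL-Analysis.Analysis"
begin

definition H :: "(nat \<Rightarrow> real) \<Rightarrow> real \<Rightarrow> real" where
  "H a t = (\<Sum>n. (a n)\<^sup>2 * exp (real n * t))"

definition A :: "(nat \<Rightarrow> real) \<Rightarrow> real \<Rightarrow> real" where
  "A a t = deriv (H a) t / H a t"

definition B :: "(nat \<Rightarrow> real) \<Rightarrow> real \<Rightarrow> real" where
  "B a t = deriv (A a) t"

definition entire_coeffs :: "(nat \<Rightarrow> real) \<Rightarrow> bool" where
  "entire_coeffs a \<longleftrightarrow> (\<forall>z::complex. summable (\<lambda>n. complex_of_real ((a n)\<^sup>2) * z ^ n))"

end

theory Submission imports Defs begin

definition Gs :: "(nat \<Rightarrow> real) \<Rightarrow> real \<Rightarrow> real" where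
  "Gs c y = (\<Sum>n. c n * y ^ n)"

lemma Gs_deriv:
  assumes "\<And>y::real. summable (\<lambda>n. c n * y ^ n)"
  shows "(Gs c has_real_derivative Gs (diffs c) y) (at y)"
  unfolding Gs_def using termdiffs_strong_converges_everywhere[OF assms] by blast

lemma Gs_diffs_summ:
  assumes "\<And>y::real. summable (\<lambda>n. c n * y ^ n)"
  shows "summable (\<lambda>n. diffs c n * y ^ n)"
  using termdiff_converges_all[OF assms] by blast

lemma entire_summ:
  assumes "entire_coeffs a"
  shows "summable (\<lambda>n. (a n)\<^sup>2 * (y::real) ^ n)"
proof -
  have "summable (\<lambda>n. complex_of_real ((a n)\<^sup>2) * (complex_of_real y) ^ n)"
    using assms unfolding entire_coeffs_def by blast
  then have "summable (\<lambda>n. complex_of_real ((a n)\<^sup>2 * y ^ n))" by simp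
  then show ?thesis by (simp only: summable_complex_of_real)
qed

context
  fixes a :: "nat \<Rightarrow> real"
  assumes ent: "entire_coeffs a" and infnz: "infinite {n. a n \<noteq> 0}"
begin

definition "cc = (\<lambda>n. (a n)\<^sup>2)"
definition "H1 t = Gs (diffs cc) (exp t) * exp t"
definition "H2 t = Gs (diffs (diffs cc)) (exp t) * exp t * exp t + Gs (diffs cc) (exp t) * exp t"
definition "Bx t = (H2 t * H a t - (H1 t)\<^sup>2) / (H a t)\<^sup>2"

lemma s0: "summable (\<lambda>n. cc n * y ^ n)"
  unfolding cc_def by (rule entire_summ[OF ent])
lemma s1: "summable (\<lambda>n. diffs cc n * y ^ n)"
  by (rule Gs_diffs_summ[OF s0])
lemma s2: "summable (\<lambda>n. diffs (diffs cc) n * y ^ n)"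
  by (rule Gs_diffs_summ[OF s1])

lemma H_eq: "H a t = Gs cc (exp t)"
  unfolding H_def Gs_def cc_def by (simp add: exp_of_nat_mult)

lemma H_summ: "summable (\<lambda>n. (a n)\<^sup>2 * exp (real n * t))"
  using s0[of "exp t"] by (simp add: cc_def exp_of_nat_mult)

lemma H_pos: "H a t > 0"
proof -
  obtain n where n: "a n \<noteq> 0" using infnz infinite_imp_nonempty by blast
  have "sum (\<lambda>n. (a n)\<^sup>2 * exp (real n * t)) {n} \<le> H a t"
    unfolding H_def by (rule sum_le_suminf[OF H_summ]) auto
  moreover have "(a n)\<^sup>2 * exp (real n * t) > 0" using n by simp
  ultimately show ?thesis by simp
qed

lemma H_deriv: "(H a has_real_derivative H1 t) (at t)"
proof -
  have "((\<lambda>t. Gs cc (exp t)) has_real_derivative Gs (diffs cc) (exp t) * exp t) (at t)"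
    by (rule DERIV_chain2[OF Gs_deriv[OF s0] DERIV_exp])
  then show ?thesis unfolding H1_def by (simp add: H_eq[abs_def])
qed

lemma H1_deriv: "(H1 has_real_derivative H2 t) (at t)"
proof -
  have "((\<lambda>t. Gs (diffs cc) (exp t)) has_real_derivative Gs (diffs (diffs cc)) (exp t) * exp t) (at t)"
    by (rule DERIV_chain2[OF Gs_deriv[OF s1] DERIV_exp])
  from DERIV_mult[OF this DERIV_exp] show ?thesis
    unfolding H1_def[abs_def] H2_def by (simp add: algebra_simps)
qed

lemma H2_cont: "isCont H2 t"
proof -
  have c1: "isCont (\<lambda>t. Gs (diffs (diffs cc)) (exp t)) t"
    by (rule isCont_o2[OF _ DERIV_isCont[OF Gs_deriv[OF s2]]]) simp
  have c2: "isCont (\<lambda>t. Gs (diffs cc) (exp t)) t"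
    by (rule isCont_o2[OF _ DERIV_isCont[OF Gs_deriv[OF s1]]]) simp
  show ?thesis unfolding H2_def[abs_def] using c1 c2 by (intro continuous_intros)
qed

lemma A_eq: "A a t = H1 t / H a t"
  unfolding A_def using DERIV_imp_deriv[OF H_deriv] by simp

lemma A_deriv: "(A a has_real_derivative Bx t) (at t)"
proof -
  have "((\<lambda>t. H1 t / H a t) has_real_derivative (H2 t * H a t - H1 t * H1 t) / (H a t * H a t)) (at t)"
    using DERIV_divide[OF H1_deriv H_deriv] H_pos[of t] by simp
  then show ?thesis unfolding Bx_def by (simp add: A_eq[abs_def] power2_eq_square)
qed

lemma B_eq: "B a t = Bx t"
  unfolding B_def using DERIV_imp_deriv[OF A_deriv] by simp

lemma B_cont: "continuous_on S (B a)"
proof -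
  have "isCont Bx t" for t
    unfolding Bx_def using H_pos[of t] H2_cont[of t] DERIV_isCont[OF H_deriv, of t] DERIV_isCont[OF H1_deriv, of t]
    by (intro continuous_intros) auto
  then show ?thesis by (simp add: B_eq[abs_def] continuous_at_imp_continuous_on)
qed

lemma lnH_deriv: "((\<lambda>u. ln (H a u)) has_real_derivative A a t) (at t)"
  using DERIV_chain2[OF DERIV_ln_divide[OF H_pos[of t]] H_deriv[of t]] by (simp add: A_eq)

end

theorem lemma3p6:
  fixes a :: "nat \<Rightarrow> real" and tl :: "nat \<Rightarrow> real"
    and l :: nat and t s :: real and \<tau> :: complex
  assumes nonneg: "\<And>n. a n \<ge> 0"
    and inf_nz: "infinite {n. a n \<noteq> 0}"
    and entire: "entire_coeffs a"
    and B_mono: "mono (B a)"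
    and B_unbdd: "\<not> bdd_above (range (B a))"
    and tl_def: "\<And>m. (\<exists>x. B a x = real m ^ 6) \<Longrightarrow> B a (tl m) = real m ^ 6"
    and tl_mono: "\<And>m n. m \<le> n \<Longrightarrow> (\<exists>x. B a x = real m ^ 6) \<Longrightarrow> tl m \<le> tl n"
    and tl_lim: "filterlim tl at_top sequentially"
    and l4: "l \<ge> 4"
    and l_ex: "\<exists>x. B a x = real l ^ 6"
    and long: "tl (l + 1) - tl l \<ge> 8 / (real l)\<^sup>2"
    and t_int: "t \<in> {tl l + 2 / (real l)\<^sup>2 .. tl (l + 1) - 2 / (real l)\<^sup>2}"
    and tau: "cmod (\<tau> - complex_of_real t) < 1 / sqrt (B a t)"
    and s: "4 < s" "s < B a t powr (1/6)"
  shows "cmod (\<Sum>k. if \<bar>real k - A a t\<bar> > s * sqrt (B a t)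
                   then complex_of_real ((a k)\<^sup>2) * exp (of_nat k * \<tau>) else 0)
         \<le> 2 * H a (Re \<tau>) * exp (- ((s - 4)\<^sup>2) / 8)"
proof -
  define lo where "lo = tl l"
  define hi where "hi = tl (l + 1)"
  define Bt where "Bt = B a t"
  define b where "b = sqrt Bt"
  define Bm :: real where "Bm = (real l + 1) ^ 6"
  define x where "x = Re \<tau>"
  define \<mu> where "\<mu> = (s - 4) / 4"
  define lam where "lam = \<mu> / b"
  define E where "E = exp (- ((s - 4)\<^sup>2) / 8)"
  have Hpos: "\<And>u. H a u > 0" using H_pos[OF entire inf_nz] .
  have Ader: "\<And>u. (A a has_real_derivative B a u) (at u)"
    using A_deriv[OF entire inf_nz] B_eq[OF entire inf_nz] by metis
  have lnder: "\<And>u. ((\<lambda>u. ln (H a u)) has_real_derivative A a u) (at u)"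
    using lnH_deriv[OF entire inf_nz] .
  have Bcont: "continuous_on S (B a)" for S using B_cont[OF entire inf_nz] .
  have lpos: "real l \<ge> 4" using l4 by simp
  have Blo: "B a lo = real l ^ 6" unfolding lo_def using tl_def[OF l_ex] .
  have ex1: "\<exists>y. B a y = real (l+1) ^ 6"
  proof -
    obtain x1 where x1: "B a x1 > real (l+1) ^ 6"
      using B_unbdd unfolding bdd_above_def by (auto simp: not_le)
    have "real l ^ 6 < real (l+1) ^ 6" using lpos by (intro power_strict_mono) auto
    have "lo \<le> x1"
    proof (rule ccontr)
      assume "\<not> lo \<le> x1"
      then have "B a x1 \<le> B a lo" using B_mono by (auto simp: mono_def)
      then show False using x1 Blo \<open>real l ^ 6 < real (l+1) ^ 6\<close> by simp
    qed
    from IVT'[of "B a" lo "real (l+1) ^ 6" x1, OF _ _ this Bcont]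
    show ?thesis using Blo x1 \<open>real l ^ 6 < real (l+1) ^ 6\<close> by auto
  qed
  have Bhi: "B a hi = Bm" unfolding hi_def Bm_def using tl_def[OF ex1] by (simp add: add.commute)
  have l2pos: "(real l)\<^sup>2 > 0" using lpos by simp
  have tlo: "lo \<le> t" "t \<le> hi" using t_int l2pos unfolding lo_def hi_def
    by (auto intro: order_trans[of _ "tl l + 2 / (real l)\<^sup>2"] order_trans[of _ "tl (l + 1) - 2 / (real l)\<^sup>2"])
  have Bt_ge: "Bt \<ge> real l ^ 6" unfolding Bt_def using B_mono tlo Blo by (metis mono_def)
  have Bt_pos: "Bt > 0" using Bt_ge lpos by (smt (verit) zero_less_power)
  have "real l + 1 \<le> 5/4 * real l" using lpos by simp
  then have "Bm \<le> (5/4 * real l) ^ 6" unfolding Bm_def by (intro power_mono) auto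
  also have "\<dots> = (5/4)^6 * real l ^ 6" by (rule power_mult_distrib)
  also have "\<dots> \<le> 4 * real l ^ 6" by (intro mult_right_mono) (auto simp: power_numeral_reduce)
  finally have Bm_le: "Bm \<le> 4 * Bt" using Bt_ge by simp
  have b_pos: "b > 0" unfolding b_def using Bt_pos by simp
  have b2: "b\<^sup>2 = Bt" unfolding b_def using Bt_pos by simp
  have b_ge: "b \<ge> real l ^ 3"
    unfolding b_def by (rule real_le_rsqrt) (use Bt_ge in \<open>simp add: power_mult[symmetric]\<close>)
  have s6: "s ^ 6 < Bt"
  proof -
    have "s ^ 6 < (Bt powr (1/6)) ^ 6" using s unfolding Bt_def by (intro power_strict_mono) auto
    also have "\<dots> = Bt" using Bt_pos by (simp add: powr_realpow[symmetric] powr_powr)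
    finally show ?thesis .
  qed
  have sl: "s * (real l)\<^sup>2 \<le> b"
  proof -
    have "(s * (real l)\<^sup>2)\<^sup>2 \<le> Bt"
    proof (cases "s \<le> real l")
      case True
      have "(s * (real l)\<^sup>2)\<^sup>2 = s\<^sup>2 * real l ^ 4" by (simp add: power_mult_distrib)
      also have "\<dots> \<le> (real l)\<^sup>2 * real l ^ 4" using True s by (intro mult_right_mono power_mono) auto
      also have "\<dots> = real l ^ 6" by (simp add: power_add[symmetric])
      finally show ?thesis using Bt_ge by simp
    next
      case False
      have "(s * (real l)\<^sup>2)\<^sup>2 = s\<^sup>2 * ((real l)\<^sup>2)\<^sup>2" by (simp add: power_mult_distrib)
      also have "\<dots> \<le> s\<^sup>2 * (s\<^sup>2)\<^sup>2" using False lpos by (intro mult_left_mono power_mono) auto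
      also have "\<dots> = s ^ 6" by (simp add: power_add[symmetric] power_mult[symmetric])
      finally show ?thesis using s6 by simp
    qed
    then show ?thesis unfolding b_def by (rule real_le_rsqrt)
  qed
  define D where "D = 2 / (real l)\<^sup>2"
  have xt: "\<bar>x - t\<bar> < 1 / b"
    using tau abs_Re_le_cmod[of "\<tau> - complex_of_real t"] unfolding x_def b_def Bt_def by simp
  have "(real l)\<^sup>2 \<le> real l ^ 3" using lpos by (intro power_increasing) auto
  then have ib: "1 / b \<le> 1 / (real l)\<^sup>2" using b_ge l2pos b_pos by (intro divide_left_mono) auto
  have mu_pos: "\<mu> > 0" unfolding \<mu>_def using s by simp
  have lam_pos: "lam > 0" unfolding lam_def using mu_pos b_pos by simp
  have "lam \<le> s / b" unfolding lam_def \<mu>_def using s b_pos by (intro divide_right_mono) auto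
  also have "s / b \<le> 1 / (real l)\<^sup>2" using sl b_pos l2pos by (simp add: field_simps)
  finally have lam_le: "lam \<le> 1 / (real l)\<^sup>2" .
  have dist: "\<bar>x - t\<bar> + lam \<le> D" using xt ib lam_le unfolding D_def by simp
  have inI: "lo \<le> u \<and> u \<le> hi" if "\<bar>u - t\<bar> \<le> D" for u
    using that t_int unfolding D_def lo_def hi_def by auto
  have Bbnd: "0 < B a u \<and> B a u \<le> Bm" if "lo \<le> u" "u \<le> hi" for u
  proof -
    have "B a lo \<le> B a u" "B a u \<le> B a hi" using that B_mono by (auto simp: mono_def)
    moreover have p6: "0 < real l ^ 6" using lpos by simp
    ultimately show ?thesis using Blo Bhi by linarith
  qed
  have taylor: "ln (H a z) \<le> ln (H a y) + (z - y) * A a y + (z - y)\<^sup>2 / 2 * Bm"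
    if y: "\<bar>y - t\<bar> \<le> D" and z: "\<bar>z - t\<bar> \<le> D" for y z
  proof (cases "z = y")
    case True then show ?thesis by simp
  next
    case False
    define df where "df = (\<lambda>m::nat. if m = 0 then (\<lambda>u. ln (H a u)) else if m = 1 then A a else B a)"
    have "\<exists>\<xi>. (if z < y then z < \<xi> \<and> \<xi> < y else y < \<xi> \<and> \<xi> < z) \<and>
      ln (H a z) = (\<Sum>m<2. (df m y / fact m) * (z - y)^m) + (df 2 \<xi> / fact 2) * (z - y)^2"
    proof (rule Taylor[of 2 df "\<lambda>u. ln (H a u)" "min y z" "max y z"])
      show "\<forall>m u. m < 2 \<and> min y z \<le> u \<and> u \<le> max y z \<longrightarrow> DERIV (df m) u :> df (Suc m) u"
        using lnder Ader unfolding df_def by (auto simp: less_2_cases_iff)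
    qed (use False in \<open>auto simp: df_def\<close>)
    then obtain \<xi> where xi: "(if z < y then z < \<xi> \<and> \<xi> < y else y < \<xi> \<and> \<xi> < z)"
      and eq: "ln (H a z) = (\<Sum>m<2. (df m y / fact m) * (z - y)^m) + (df 2 \<xi> / fact 2) * (z - y)^2"
      by blast
    have "\<bar>\<xi> - t\<bar> \<le> D" using xi y z by (auto split: if_splits)
    then have "B a \<xi> \<le> Bm" using inI Bbnd by blast
    have eq2: "ln (H a z) = ln (H a y) + (z - y) * A a y + (z - y)\<^sup>2 / 2 * B a \<xi>"
      using eq by (simp add: df_def numeral_2_eq_2 lessThan_Suc)
    have "(z - y)\<^sup>2 / 2 * B a \<xi> \<le> (z - y)\<^sup>2 / 2 * Bm"
      using \<open>B a \<xi> \<le> Bm\<close> by (intro mult_left_mono) auto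
    then show ?thesis using eq2 by linarith
  qed
  have lip: "\<bar>A a y - A a t\<bar> \<le> \<bar>y - t\<bar> * Bm" if y: "\<bar>y - t\<bar> \<le> D" for y
  proof -
    consider "y < t" | "y = t" | "t < y" by linarith
    then show ?thesis
    proof cases
      case 1
      from MVT2[OF 1 Ader] obtain z where z: "y < z" "z < t" "A a t - A a y = (t - y) * B a z" by blast
      have "\<bar>z - t\<bar> \<le> D" using z y by auto
      then have bz: "0 < B a z \<and> B a z \<le> Bm" using inI Bbnd by blast
      have m1: "(t - y) * B a z \<le> (t - y) * Bm" using bz 1 by (intro mult_left_mono) auto
      have m2: "0 \<le> (t - y) * B a z" using bz 1 by simp
      show ?thesis using z m1 m2 1 by (smt (verit))
    next
      case 2 then show ?thesis by simp
    next
      case 3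
      from MVT2[OF 3 Ader] obtain z where z: "t < z" "z < y" "A a y - A a t = (y - t) * B a z" by blast
      have "\<bar>z - t\<bar> \<le> D" using z y by auto
      then have bz: "0 < B a z \<and> B a z \<le> Bm" using inI Bbnd by blast
      have m1: "(y - t) * B a z \<le> (y - t) * Bm" using bz 3 by (intro mult_left_mono) auto
      have m2: "0 \<le> (y - t) * B a z" using bz 3 by simp
      show ?thesis using z m1 m2 3 by (smt (verit))
    qed
  qed
  define At where "At = A a t"
  define Ax where "Ax = A a x"
  have xD: "\<bar>x - t\<bar> \<le> D" using dist lam_pos by linarith
  have lamb: "lam / b = \<mu> / Bt" unfolding lam_def using b2 by (simp add: power2_eq_square)
  have Bm_pos: "Bm > 0" unfolding Bm_def by simp
  have k1: "lam * (\<bar>x - t\<bar> * Bm) \<le> 4 * \<mu>"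
  proof -
    have "lam * (\<bar>x - t\<bar> * Bm) \<le> lam * (1 / b * Bm)"
      using xt lam_pos Bm_pos by (intro mult_left_mono mult_right_mono) auto
    also have "\<dots> = (lam / b) * Bm" by simp
    also have "\<dots> = \<mu> * Bm / Bt" using lamb by simp
    also have "\<dots> \<le> \<mu> * (4 * Bt) / Bt" using mu_pos Bm_le Bt_pos by (intro divide_right_mono mult_left_mono) auto
    also have "\<dots> = 4 * \<mu>" using Bt_pos by simp
    finally show ?thesis .
  qed
  have k2: "lam * s * b = \<mu> * s" unfolding lam_def using b_pos by simp
  have k3: "lam\<^sup>2 / 2 * Bm \<le> 2 * \<mu>\<^sup>2"
  proof -
    have "lam\<^sup>2 = \<mu>\<^sup>2 / Bt" unfolding lam_def using b2 by (simp add: power_divide)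
    then have "lam\<^sup>2 / 2 * Bm = \<mu>\<^sup>2 * Bm / (2 * Bt)" by simp
    also have "\<dots> \<le> \<mu>\<^sup>2 * (4 * Bt) / (2 * Bt)" using Bm_le Bt_pos by (intro divide_right_mono mult_left_mono) auto
    also have "\<dots> = 2 * \<mu>\<^sup>2" using Bt_pos by simp
    finally show ?thesis .
  qed
  have k4: "- \<mu> * s + 4 * \<mu> + 2 * \<mu>\<^sup>2 = - ((s - 4)\<^sup>2) / 8"
    unfolding \<mu>_def by (simp add: power2_eq_square field_simps)
  have tail: "exp (- \<sigma> * lam * At - lam * s * b) * H a (x + \<sigma> * lam) \<le> H a x * E"
    if sg: "\<sigma> = 1 \<or> \<sigma> = -1" for \<sigma> :: real
  proof -
    define z where "z = x + \<sigma> * lam"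
    have zD: "\<bar>z - t\<bar> \<le> D" using dist sg lam_pos unfolding z_def by (auto simp: abs_if split: if_splits)
    have zx: "z - x = \<sigma> * lam" "(z - x)\<^sup>2 = lam\<^sup>2" using sg unfolding z_def by auto
    have lnz: "ln (H a z) \<le> ln (H a x) + \<sigma> * lam * Ax + lam\<^sup>2 / 2 * Bm"
      using taylor[OF xD zD] zx unfolding Ax_def by simp
    have Hz: "H a z \<le> H a x * exp (\<sigma> * lam * Ax + lam\<^sup>2 / 2 * Bm)"
    proof -
      have "H a z = exp (ln (H a z))" using Hpos by simp
      also have "\<dots> \<le> exp (ln (H a x) + (\<sigma> * lam * Ax + lam\<^sup>2 / 2 * Bm))" using lnz by simp
      also have "\<dots> = H a x * exp (\<sigma> * lam * Ax + lam\<^sup>2 / 2 * Bm)" using Hpos by (simp add: exp_add)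
      finally show ?thesis .
    qed
    have "\<sigma> * lam * (Ax - At) \<le> lam * \<bar>Ax - At\<bar>" using sg lam_pos by auto
    also have "\<dots> \<le> lam * (\<bar>x - t\<bar> * Bm)" using lip[OF xD] lam_pos unfolding Ax_def At_def
      by (intro mult_left_mono) auto
    finally have "\<sigma> * lam * (Ax - At) \<le> 4 * \<mu>" using k1 by linarith
    then have ex: "- \<sigma> * lam * At - lam * s * b + (\<sigma> * lam * Ax + lam\<^sup>2 / 2 * Bm) \<le> - ((s - 4)\<^sup>2) / 8"
    proof -
      have e1: "\<sigma> * lam * Ax - \<sigma> * lam * At \<le> 4 * \<mu>" using \<open>\<sigma> * lam * (Ax - At) \<le> 4 * \<mu>\<close>
        by (simp add: right_diff_distrib)
      have e2: "- \<sigma> * lam * At = - (\<sigma> * lam * At)" by simp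
      show ?thesis using e1 e2 k2 k3 k4 by linarith
    qed
    have "exp (- \<sigma> * lam * At - lam * s * b) * H a z
        \<le> exp (- \<sigma> * lam * At - lam * s * b) * (H a x * exp (\<sigma> * lam * Ax + lam\<^sup>2 / 2 * Bm))"
      using Hz by (intro mult_left_mono) auto
    also have "\<dots> = H a x * exp (- \<sigma> * lam * At - lam * s * b + (\<sigma> * lam * Ax + lam\<^sup>2 / 2 * Bm))"
      by (simp add: exp_add)
    also have "\<dots> \<le> H a x * E" unfolding E_def using ex Hpos[of x] by (intro mult_left_mono) auto
    finally show ?thesis unfolding z_def .
  qed
  define c1 where "c1 = exp (- 1 * lam * At - lam * s * b)"
  define c2 where "c2 = exp (- (-1) * lam * At - lam * s * b)"
  define x1 where "x1 = x + 1 * lam"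
  define x2 where "x2 = x + (-1) * lam"
  have t1: "c1 * H a x1 \<le> H a x * E" unfolding c1_def x1_def by (rule tail) simp
  have t2: "c2 * H a x2 \<le> H a x * E" unfolding c2_def x2_def by (rule tail) simp
  define T where "T = (\<lambda>k. if \<bar>real k - At\<bar> > s * b
                   then complex_of_real ((a k)\<^sup>2) * exp (of_nat k * \<tau>) else 0)"
  define U where "U = (\<lambda>k. c1 * ((a k)\<^sup>2 * exp (real k * x1)) + c2 * ((a k)\<^sup>2 * exp (real k * x2)))"
  have sU: "summable U" unfolding U_def
    using H_summ[OF entire inf_nz, of x1] H_summ[OF entire inf_nz, of x2]
    by (intro summable_add summable_mult)
  have sumU: "suminf U = c1 * H a x1 + c2 * H a x2" unfolding U_def H_def
    using H_summ[OF entire inf_nz, of x1] H_summ[OF entire inf_nz, of x2]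
    by (subst suminf_add[symmetric]) (auto intro: summable_mult simp: suminf_mult)
  have c1p: "c1 > 0" "c2 > 0" unfolding c1_def c2_def by auto
  have TU: "norm (T k) \<le> U k" for k
  proof (cases "\<bar>real k - At\<bar> > s * b")
    case False
    then have "T k = 0" unfolding T_def by simp
    moreover have "U k \<ge> 0" unfolding U_def using c1p by simp
    ultimately show ?thesis by simp
  next
    case True
    have nT: "norm (T k) = (a k)\<^sup>2 * exp (real k * x)"
      using True unfolding T_def x_def by (simp add: norm_mult norm_power)
    have u1: "0 \<le> c1 * ((a k)\<^sup>2 * exp (real k * x1))" "0 \<le> c2 * ((a k)\<^sup>2 * exp (real k * x2))"
      using c1p by auto
    consider "real k - At > s * b" | "At - real k > s * b" using True by linarith
    then show ?thesis
    proof cases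
      case 1
      have "c1 * exp (real k * x1) = exp (real k * x + lam * (real k - At - s * b))"
        unfolding c1_def x1_def by (simp add: exp_add[symmetric] algebra_simps)
      also have "\<dots> \<ge> exp (real k * x)" using 1 lam_pos by simp
      finally have "(a k)\<^sup>2 * exp (real k * x) \<le> (a k)\<^sup>2 * (c1 * exp (real k * x1))"
        by (intro mult_left_mono) auto
      then show ?thesis using nT u1 unfolding U_def by (simp add: algebra_simps)
    next
      case 2
      have "c2 * exp (real k * x2) = exp (real k * x + lam * (At - real k - s * b))"
        unfolding c2_def x2_def by (simp add: exp_add[symmetric] algebra_simps)
      also have "\<dots> \<ge> exp (real k * x)" using 2 lam_pos by simp
      finally have "(a k)\<^sup>2 * exp (real k * x) \<le> (a k)\<^sup>2 * (c2 * exp (real k * x2))"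
        by (intro mult_left_mono) auto
      then show ?thesis using nT u1 unfolding U_def by (simp add: algebra_simps)
    qed
  qed
  have snT: "summable (\<lambda>k. norm (T k))"
    by (rule summable_comparison_test'[OF sU]) (use TU in auto)
  have "norm (suminf T) \<le> (\<Sum>k. norm (T k))" by (rule summable_norm[OF snT])
  also have "\<dots> \<le> suminf U" by (rule suminf_le[OF TU snT sU])
  also have "\<dots> \<le> 2 * H a x * E" using sumU t1 t2 by simp
  finally show ?thesis unfolding T_def At_def b_def Bt_def x_def E_def .
qed
end
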